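(* For all integers $0 <k \leq \ell <n$, \[ \begin{aligned} D(n-k,k)\, D(n-\ell,\ell) &\geq D(n-k+1,k-1)\, D(n-\ell-1,\ell+1), \\ D(n-k,k)\, D(n-\ell,\ell) &\geq D(n-k,k-1)\, D(n-\ell,\ell+1). \end{aligned} \]
   Context: For non-negative integers $m,n$, the Delannoy number $D(m,n)$ is the number of lattice paths from $(0,0)$ to $(m,n)$ using only steps from $(i,j)$ to $(i+1,j)$, $(i,j+1)$ or $(i+1,j+1)$. *)

theory Defs
  imports Main
begin

definition delannoy_steps :: "(nat \<times> nat) set" where
  "delannoy_steps = {(1,0), (0,1), (1,1)}"

definition delannoy_paths :: "nat \<Rightarrow> nat \<Rightarrow> (nat \<times> nat) list set" where
  "delannoy_paths m n = {ps. set ps \<subseteq> delannoy_steps \<and>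
      sum_list (map fst ps) = m \<and> sum_list (map snd ps) = n}"

definition Delannoy :: "nat \<Rightarrow> nat \<Rightarrow> nat" where
  "Delannoy m n = card (delannoy_paths m n)"

end

theory Submission imports Defs Complex_Main begin

lemma paths_eq: "delannoy_paths m n =
   (if m = 0 \<and> n = 0 then {[]} else {})
 \<union> (if 0 < m then (#) (1,0) ` delannoy_paths (m-1) n else {})
 \<union> (if 0 < n then (#) (0,1) ` delannoy_paths m (n-1) else {})
 \<union> (if 0 < m \<and> 0 < n then (#) (1,1) ` delannoy_paths (m-1) (n-1) else {})"
proof (intro set_eqI iffI)
  fix ps assume ps: "ps \<in> delannoy_paths m n"
  show "ps \<in> (if m = 0 \<and> n = 0 then {[]} else {})
 \<union> (if 0 < m then (#) (1,0) ` delannoy_paths (m-1) n else {})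
 \<union> (if 0 < n then (#) (0,1) ` delannoy_paths m (n-1) else {})
 \<union> (if 0 < m \<and> 0 < n then (#) (1,1) ` delannoy_paths (m-1) (n-1) else {})"
  proof (cases ps)
    case Nil then show ?thesis using ps by (auto simp: delannoy_paths_def)
  next
    case (Cons x xs)
    have x: "x = (1,0) \<or> x = (0,1) \<or> x = (1,1)" and xs: "set xs \<subseteq> delannoy_steps"
      using ps Cons by (auto simp: delannoy_paths_def delannoy_steps_def)
    show ?thesis using x
    proof (elim disjE)
      assume "x = (1,0)" then show ?thesis using ps Cons xs by (auto simp: delannoy_paths_def)
    next
      assume "x = (0,1)" then show ?thesis using ps Cons xs by (auto simp: delannoy_paths_def)
    next
      assume "x = (1,1)" then show ?thesis using ps Cons xs by (auto simp: delannoy_paths_def)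
    qed
  qed
next
  fix ps assume "ps \<in> (if m = 0 \<and> n = 0 then {[]} else {})
 \<union> (if 0 < m then (#) (1,0) ` delannoy_paths (m-1) n else {})
 \<union> (if 0 < n then (#) (0,1) ` delannoy_paths m (n-1) else {})
 \<union> (if 0 < m \<and> 0 < n then (#) (1,1) ` delannoy_paths (m-1) (n-1) else {})"
  then show "ps \<in> delannoy_paths m n"
    by (auto simp: delannoy_paths_def delannoy_steps_def split: if_splits)
qed


lemma paths_finite: "finite (delannoy_paths m n)"
proof (induction "m+n" arbitrary: m n rule: less_induct)
  case less
  show ?case
    apply (subst paths_eq)
    using less by auto
qed

lemma Delannoy_eq: "Delannoy m n =
   (if m = 0 \<and> n = 0 then 1 else 0)
 + (if 0 < m then Delannoy (m-1) n else 0)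
 + (if 0 < n then Delannoy m (n-1) else 0)
 + (if 0 < m \<and> 0 < n then Delannoy (m-1) (n-1) else 0)"
proof -
  let ?A = "(if m = 0 \<and> n = 0 then {[]} else {}) :: (nat \<times> nat) list set"
  let ?B = "(if 0 < m then (#) (1,0) ` delannoy_paths (m-1) n else {})"
  let ?C = "(if 0 < n then (#) (0,1) ` delannoy_paths m (n-1) else {})"
  let ?E = "(if 0 < m \<and> 0 < n then (#) (1,1) ` delannoy_paths (m-1) (n-1) else {})"
  have f: "finite ?A" "finite ?B" "finite ?C" "finite ?E" by (auto simp: paths_finite)
  have c1: "card ?A = (if m = 0 \<and> n = 0 then 1 else 0)" by simp
  have c2: "card ?B = (if 0 < m then Delannoy (m-1) n else 0)"
    by (simp add: Delannoy_def card_image)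
  have c3: "card ?C = (if 0 < n then Delannoy m (n-1) else 0)"
    by (simp add: Delannoy_def card_image)
  have c4: "card ?E = (if 0 < m \<and> 0 < n then Delannoy (m-1) (n-1) else 0)"
    by (simp add: Delannoy_def card_image)
  have "card (?A \<union> ?B \<union> ?C \<union> ?E) = card ?A + card ?B + card ?C + card ?E"
    apply (subst card_Un_disjoint, use f in auto)
    apply (subst card_Un_disjoint, use f in auto)
    done
  then show ?thesis using c1 c2 c3 c4 by (simp add: Delannoy_def paths_eq[of m n])
qed

lemma D0 [simp]: "Delannoy 0 n = 1"
  by (induction n) (subst Delannoy_eq, simp)+

lemma D0' [simp]: "Delannoy m 0 = 1"
  by (induction m) (subst Delannoy_eq, simp)+

lemma Drec: "Delannoy (Suc m) (Suc n) = Delannoy m (Suc n) + Delannoy (Suc m) n + Delannoy m n"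
  by (subst Delannoy_eq) simp

lemma Dsym: "Delannoy m n = Delannoy n m"
proof (induction m arbitrary: n)
  case 0 then show ?case by simp
next
  case (Suc m)
  note IHm = Suc.IH
  show ?case
  proof (induction n)
    case 0 then show ?case by simp
  next
    case (Suc n) then show ?case using IHm by (simp add: Drec)
  qed
qed

lemma Dpos: "Delannoy m n > 0"
proof (induction m arbitrary: n)
  case 0 then show ?case by simp
next
  case (Suc m) then show ?case by (cases n) (simp_all add: Drec)
qed


definition lc :: "(nat \<Rightarrow> real) \<Rightarrow> bool" where
  "lc f \<longleftrightarrow> (\<forall>j. f j * f (Suc (Suc j)) \<le> (f (Suc j))\<^sup>2)"

lemma lc3:
  assumes pos: "\<And>j. u j > 0" and l: "lc u"
  shows "u j * u (Suc (Suc (Suc j))) \<le> u (Suc j) * u (Suc (Suc j))"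
proof -
  have a: "u j * u (Suc (Suc j)) \<le> (u (Suc j))\<^sup>2" and b: "u (Suc j) * u (Suc (Suc (Suc j))) \<le> (u (Suc (Suc j)))\<^sup>2"
    using l unfolding lc_def by auto
  have "(u j * u (Suc (Suc j))) * (u (Suc j) * u (Suc (Suc (Suc j)))) \<le> (u (Suc j))\<^sup>2 * (u (Suc (Suc j)))\<^sup>2"
    by (rule mult_mono[OF a b]) (use pos in \<open>auto intro: mult_nonneg_nonneg less_imp_le\<close>)
  then have "(u (Suc j) * u (Suc (Suc j))) * (u j * u (Suc (Suc (Suc j)))) \<le> (u (Suc j) * u (Suc (Suc j))) * (u (Suc j) * u (Suc (Suc j)))"
    by (simp add: power2_eq_square algebra_simps)
  moreover have "u (Suc j) * u (Suc (Suc j)) > 0" using pos by simp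
  ultimately show ?thesis by (meson mult_le_cancel_left_pos)
qed

lemma lc_shift:
  assumes pos: "\<And>j. u j > 0" and l: "lc u"
    and v0: "v 0 = u 0" and vS: "\<And>j. v (Suc j) = u (Suc j) + u j"
  shows "lc v"
  unfolding lc_def
proof
  fix j
  show "v j * v (Suc (Suc j)) \<le> (v (Suc j))\<^sup>2"
  proof (cases j)
    case 0
    have "u 0 * u 2 \<le> (u 1)\<^sup>2" using l unfolding lc_def by (metis One_nat_def Suc_1)
    moreover have "u 0 > 0" "u 1 > 0" using pos by auto
    ultimately show ?thesis using 0 v0 vS[of 0] vS[of 1]
      by (simp add: power2_eq_square algebra_simps numeral_2_eq_2) (smt (verit) mult_pos_pos)
  next
    case (Suc i)
    have a: "u (Suc i) * u (Suc (Suc (Suc i))) \<le> (u (Suc (Suc i)))\<^sup>2"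
      and b: "u i * u (Suc (Suc i)) \<le> (u (Suc i))\<^sup>2" using l unfolding lc_def by auto
    have c: "u i * u (Suc (Suc (Suc i))) \<le> u (Suc i) * u (Suc (Suc i))" by (rule lc3[OF pos l])
    show ?thesis using a b c Suc vS
      by (simp add: power2_eq_square algebra_simps)
  qed
qed

lemma psum_aux:
  assumes pos: "\<And>j. v j > 0" and l: "lc v"
    and s0: "s 0 = v 0" and sS: "\<And>j. s (Suc j) = s j + v (Suc j)"
  shows "s j * v (Suc (Suc j)) \<le> s (Suc j) * v (Suc j)"
proof (induction j)
  case 0
  have "v 0 * v 2 \<le> (v 1)\<^sup>2" using l unfolding lc_def by (metis One_nat_def Suc_1)
  then show ?case using s0 sS[of 0] pos[of 0] pos[of 1]
    by (simp add: power2_eq_square algebra_simps numeral_2_eq_2) (smt (verit) mult_pos_pos)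
next
  case (Suc j)
  have spos: "s i \<ge> 0" for i
    by (induction i) (use s0 sS pos in \<open>auto intro: add_nonneg_nonneg less_imp_le\<close>)
  have h3: "v (Suc j) * v (Suc (Suc (Suc j))) \<le> (v (Suc (Suc j)))\<^sup>2" using l unfolding lc_def by auto
  have h1: "s j * (v (Suc j) * v (Suc (Suc (Suc j)))) \<le> s j * (v (Suc (Suc j)))\<^sup>2"
    by (rule mult_left_mono[OF h3 spos])
  have h2: "(s j * v (Suc (Suc j))) * v (Suc (Suc j)) \<le> (s (Suc j) * v (Suc j)) * v (Suc (Suc j))"
    by (rule mult_right_mono[OF Suc.IH]) (use pos in \<open>simp add: less_imp_le\<close>)
  have "v (Suc j) * (s j * v (Suc (Suc (Suc j)))) \<le> v (Suc j) * (s (Suc j) * v (Suc (Suc j)))"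
    using h1 h2 by (simp add: power2_eq_square algebra_simps)
  then have h4: "s j * v (Suc (Suc (Suc j))) \<le> s (Suc j) * v (Suc (Suc j))"
    using pos[of "Suc j"] by (meson mult_le_cancel_left_pos)
  show ?case using h4 h3 sS[of j] sS[of "Suc j"]
    by (simp add: power2_eq_square algebra_simps)
qed

lemma lc_psum:
  assumes pos: "\<And>j. v j > 0" and l: "lc v"
    and s0: "s 0 = v 0" and sS: "\<And>j. s (Suc j) = s j + v (Suc j)"
  shows "lc s"
  unfolding lc_def
proof
  fix j
  have "s j * v (Suc (Suc j)) \<le> s (Suc j) * v (Suc j)" by (rule psum_aux[OF assms])
  then show "s j * s (Suc (Suc j)) \<le> (s (Suc j))\<^sup>2"
    using sS[of j] sS[of "Suc j"] by (simp add: power2_eq_square algebra_simps)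
qed

lemma tp_aux:
  assumes pos: "\<And>j. u j > 0" and l: "lc u"
    and w0: "w 0 = u 0" and wS: "\<And>j. w (Suc j) = w j + u (Suc j) + u j"
  shows "u (Suc j) * w j \<le> u j * w (Suc j)"
proof (induction j)
  case 0 then show ?case using w0 wS[of 0] pos[of 0] pos[of 1]
    by (simp add: algebra_simps)
next
  case (Suc j)
  have wpos: "w i \<ge> 0" for i
    by (induction i) (use w0 wS pos in \<open>auto intro: add_nonneg_nonneg less_imp_le\<close>, smt (verit) pos)
  have h3: "u j * u (Suc (Suc j)) \<le> (u (Suc j))\<^sup>2" using l unfolding lc_def by auto
  have h1: "u (Suc (Suc j)) * (u (Suc j) * w j) \<le> u (Suc (Suc j)) * (u j * w (Suc j))"
    by (rule mult_left_mono[OF Suc.IH]) (use pos in \<open>simp add: less_imp_le\<close>)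
  have h2: "(u j * u (Suc (Suc j))) * w (Suc j) \<le> (u (Suc j))\<^sup>2 * w (Suc j)"
    by (rule mult_right_mono[OF h3 wpos])
  have "u (Suc j) * (u (Suc (Suc j)) * w j) \<le> u (Suc j) * (u (Suc j) * w (Suc j))"
    using h1 h2 by (simp add: power2_eq_square algebra_simps)
  then have h4: "u (Suc (Suc j)) * w j \<le> u (Suc j) * w (Suc j)"
    using pos[of "Suc j"] by (meson mult_le_cancel_left_pos)
  show ?case using h4 h3 wS[of j] wS[of "Suc j"]
    by (simp add: power2_eq_square algebra_simps)
qed


lemma lc_row: "lc (\<lambda>j. real (Delannoy a j))"
proof (induction a)
  case 0 then show ?case by (simp add: lc_def)
next
  case (Suc a)
  let ?u = "\<lambda>j. real (Delannoy a j)"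
  let ?v = "\<lambda>j. case j of 0 \<Rightarrow> ?u 0 | Suc i \<Rightarrow> ?u (Suc i) + ?u i"
  have upos: "\<And>j. ?u j > 0" using Dpos by simp
  have lv: "lc ?v" by (rule lc_shift[OF upos Suc.IH]) auto
  have vpos: "\<And>j. ?v j > 0" using upos by (simp split: nat.split add: add_pos_pos)
  show ?case
    by (rule lc_psum[OF vpos lv]) (simp_all add: Drec)
qed

lemma tp_row: "real (Delannoy a (Suc j)) * real (Delannoy (Suc a) j) \<le> real (Delannoy a j) * real (Delannoy (Suc a) (Suc j))"
  by (rule tp_aux[where u="\<lambda>j. real (Delannoy a j)" and w="\<lambda>j. real (Delannoy (Suc a) j)"])
     (use Dpos lc_row in \<open>simp_all add: Drec\<close>)

definition r :: "nat \<Rightarrow> nat \<Rightarrow> real" where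
  "r a j = real (Delannoy a (Suc j)) / real (Delannoy a j)"

lemma r_mono_a: "r a j \<le> r (Suc a) j"
proof -
  have p1: "real (Delannoy a j) > 0" "real (Delannoy (Suc a) j) > 0" using Dpos by auto
  show ?thesis unfolding r_def using tp_row[of a j] p1
    by (simp add: divide_le_eq le_divide_eq mult.commute mult.left_commute)
qed

lemma r_anti_j: "r a (Suc j) \<le> r a j"
proof -
  have p1: "real (Delannoy a j) > 0" "real (Delannoy a (Suc j)) > 0" using Dpos by auto
  have "real (Delannoy a j) * real (Delannoy a (Suc (Suc j))) \<le> (real (Delannoy a (Suc j)))\<^sup>2"
    using lc_row[of a] unfolding lc_def by blast
  then show ?thesis unfolding r_def using p1
    by (simp add: divide_le_eq le_divide_eq power2_eq_square mult.commute mult.left_commute)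
qed

lemma r_mono: assumes "x \<le> y" "j \<le> i" shows "r x i \<le> r y j"
proof -
  have "r x i \<le> r x j" using lift_Suc_antimono_le[of "r x", OF r_anti_j assms(2)] .
  also have "\<dots> \<le> r y j" using lift_Suc_mono_le[of "\<lambda>a. r a j", OF r_mono_a assms(1)] .
  finally show ?thesis .
qed

lemma r_prod: assumes "x \<le> y" "j \<le> i"
  shows "real (Delannoy x (Suc i)) * real (Delannoy y j) \<le> real (Delannoy y (Suc j)) * real (Delannoy x i)"
proof -
  have p: "real (Delannoy x i) > 0" "real (Delannoy y j) > 0" using Dpos by auto
  show ?thesis using r_mono[OF assms] p unfolding r_def
    by (simp add: divide_le_eq le_divide_eq mult.commute mult.left_commute)
qed

lemma cancel_aux:
  fixes A B C E p q :: real
  assumes "0 \<le> A" "0 \<le> C" "A * p \<le> B * q" "C * q \<le> E * p" "p > 0" "q > 0"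
  shows "A * C \<le> B * E"
proof -
  have "0 \<le> A * p" using assms by simp
  have "(A * p) * (C * q) \<le> (B * q) * (E * p)"
  proof -
    have "0 \<le> B * q" using \<open>0 \<le> A * p\<close> assms(3) by linarith
    moreover have "0 \<le> C * q" using assms by simp
    ultimately show ?thesis using mult_mono[OF assms(3) assms(4)] by simp
  qed
  then have "(p * q) * (A * C) \<le> (p * q) * (B * E)" by (simp add: algebra_simps)
  then show ?thesis using assms by (meson mult_le_cancel_left_pos mult_pos_pos)
qed

theorem corollary6p3:
  fixes k l n :: nat
  assumes "0 < k" and "k \<le> l" and "l < n"
  shows "Delannoy (n - k) k * Delannoy (n - l) l
           \<ge> Delannoy (n - k + 1) (k - 1) * Delannoy (n - l - 1) (l + 1)
       \<and> Delannoy (n - k) k * Delannoy (n - l) l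
           \<ge> Delannoy (n - k) (k - 1) * Delannoy (n - l) (l + 1)"
proof -
  obtain k' where k: "k = Suc k'" using assms(1) by (cases k) auto
  define a where "a = n - k"
  define b' where "b' = n - l - 1"
  have ab: "b' \<le> a" "n - l = Suc b'" "n - k + 1 = Suc a" "n - k = a" "k' \<le> l" "Suc b' \<le> a"
    using assms k unfolding a_def b'_def by auto
  have i: "real (Delannoy b' (Suc l)) * real (Delannoy a k') \<le> real (Delannoy a (Suc k')) * real (Delannoy b' l)"
    by (rule r_prod) (use ab in auto)
  have ii: "real (Delannoy k' (Suc a)) * real (Delannoy l b') \<le> real (Delannoy l (Suc b')) * real (Delannoy k' a)"
    by (rule r_prod) (use ab in auto)
  have ii': "real (Delannoy (Suc a) k') * real (Delannoy b' l) \<le> real (Delannoy (Suc b') l) * real (Delannoy a k')"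
    using ii by (simp add: Dsym[of k'] Dsym[of l])
  have "real (Delannoy b' (Suc l)) * real (Delannoy (Suc a) k') \<le> real (Delannoy a (Suc k')) * real (Delannoy (Suc b') l)"
    by (rule cancel_aux[OF _ _ i ii']) (use Dpos in auto)
  then have 1: "Delannoy (Suc a) k' * Delannoy b' (Suc l) \<le> Delannoy a (Suc k') * Delannoy (Suc b') l"
    by (simp only: of_nat_mult[symmetric] of_nat_le_iff mult.commute)
  have iii: "real (Delannoy (Suc b') (Suc l)) * real (Delannoy a k') \<le> real (Delannoy a (Suc k')) * real (Delannoy (Suc b') l)"
    by (rule r_prod) (use ab in auto)
  then have 2: "Delannoy a k' * Delannoy (Suc b') (Suc l) \<le> Delannoy a (Suc k') * Delannoy (Suc b') l"
    by (simp only: of_nat_mult[symmetric] of_nat_le_iff mult.commute)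
  show ?thesis using 1 2 ab k by simp
qed

end
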